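(* Fix labels $z_1,\dots,z_n\in[K]$ such that every community size $n_k=\#\{i:z_i=k\}$ is positive (so $\mathbf{N}=\mathrm{diag}(n_1,\dots,n_K)$ is invertible). Then $\tilde{\mathbf{L}}\tilde{\mathbf{L}}^\top\mathbf{x}=T\mathbf{x}$ for every $\mathbf{x}\in\mathcal{S}^\perp$, and if $\tilde{\mathbf{x}}^{(1)},\dots,\tilde{\mathbf{x}}^{(K)}$ are orthonormal left singular vectors of $\tilde{\mathbf{M}}$ for the singular values $\tilde\lambda_1,\dots,\tilde\lambda_K$, then the vectors $\tilde{\mathbf{u}}^{(i)}=\mathbf{\Phi}\mathbf{N}^{-1/2}\tilde{\mathbf{x}}^{(i)}\in\mathcal{S}$ are orthonormal and satisfy $\tilde{\mathbf{L}}\tilde{\mathbf{L}}^\top\tilde{\mathbf{u}}^{(i)}=\tilde\lambda_i^2\tilde{\mathbf{u}}^{(i)}$. Consequently the SVD of $\tilde{\mathbf{L}}$ consists of the singular value $\sqrt T$ with multiplicity $n-K$, whose left singular vectors form an orthonormal basis of $\mathcal{S}^\perp$, together with the singular values $\tilde\lambda_1,\dots,\tilde\lambda_K$ with corresponding left singular vectors $\tilde{\mathbf{u}}^{(1)},\dots,\tilde{\mathbf{u}}^{(K)}$.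
   Context: Let $\mathbf{B}^{(1)},\dots,\mathbf{B}^{(T)}\in[0,1]^{K\times K}$ be symmetric with all entries positive, $\rho\in(0,1]$, and $P^{(t)}_{ij}=\rho B^{(t)}_{z_iz_j}$. $\tilde d^{(t)}_i=\sum_jP^{(t)}_{ij}$, $\tilde{\mathbf{D}}^{(t)}=\mathrm{diag}(\tilde d^{(t)}_i)$, $\tilde{\mathbf{L}}^{(t)}=\mathbf{I}_n-\tilde{\mathbf{D}}^{(t)-1/2}\mathbf{P}^{(t)}\tilde{\mathbf{D}}^{(t)-1/2}$, $\tilde{\mathbf{L}}=[\tilde{\mathbf{L}}^{(1)}\mid\cdots\mid\tilde{\mathbf{L}}^{(T)}]\in\mathbb{R}^{n\times nT}$. Community matrices: $\tilde Q^{(t)}_{kl}=\frac{n_k}{n}\frac{n_l}{n}B^{(t)}_{kl}$, $\tilde{\mathbf{D}}_Q^{(t)}$ the diagonal matrix of row sums of $\tilde{\mathbf{Q}}^{(t)}$, $\tilde{\mathbf{M}}^{(t)}=\mathbf{I}_K-\tilde{\mathbf{D}}_Q^{(t)-1/2}\tilde{\mathbf{Q}}^{(t)}\tilde{\mathbf{D}}_Q^{(t)-1/2}$, $\tilde{\mathbf{M}}=[\tilde{\mathbf{M}}^{(1)}\mid\cdots\mid\tilde{\mathbf{M}}^{(T)}]\in\mathbb{R}^{K\times KT}$ with singular values $\tilde\lambda_1\le\cdots\le\tilde\lambda_K$. $\mathbf{\Phi}\in\{0,1\}^{n\times K}$ has entries $\Phi_{ik}=1$ iff $z_i=k$; $\mathcal{S}$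 is the column span of $\mathbf{\Phi}$ and $\mathcal{S}^\perp=\{\mathbf{x}\in\mathbb{R}^n:\sum_{i:z_i=k}x_i=0\ \forall k\}$. *)

theory Defs
  imports "HOL-Analysis.Analysis"
begin

text \<open>Nodes are indexed by a finite type 'n (n = CARD('n)), communities by a finite
  type 'k (K = CARD('k)), time layers by a finite type 't (T = CARD('t)).\<close>

definition diag_mat :: "real^'n \<Rightarrow> real^'n^'n" where
  "diag_mat v = (\<chi> i j. if i = j then v $ i else 0)"

definition Pmat :: "('t \<Rightarrow> real^'k^'k) \<Rightarrow> real \<Rightarrow> ('n \<Rightarrow> 'k) \<Rightarrow> 't \<Rightarrow> real^'n^'n" where
  "Pmat B \<rho> z t = (\<chi> i j. \<rho> * B t $ z i $ z j)"

definition dtil :: "('t \<Rightarrow> real^'k^'k) \<Rightarrow> real \<Rightarrow> ('n \<Rightarrow> 'k) \<Rightarrow> 't \<Rightarrow> real^'n" where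
  "dtil B \<rho> z t = (\<chi> i. \<Sum>j\<in>UNIV. Pmat B \<rho> z t $ i $ j)"

definition Ltil :: "('t \<Rightarrow> real^'k^'k) \<Rightarrow> real \<Rightarrow> ('n \<Rightarrow> 'k) \<Rightarrow> 't \<Rightarrow> real^'n^'n" where
  "Ltil B \<rho> z t =
     mat 1 - diag_mat (\<chi> i. 1 / sqrt (dtil B \<rho> z t $ i)) ** Pmat B \<rho> z t
               ** diag_mat (\<chi> i. 1 / sqrt (dtil B \<rho> z t $ i))"

text \<open>Horizontal concatenation [L^(1) | ... | L^(T)]: column (j,t) is column j of L^(t).\<close>
definition Lcat :: "('t::finite \<Rightarrow> real^'k^'k) \<Rightarrow> real \<Rightarrow> ('n::finite \<Rightarrow> 'k) \<Rightarrow> real^('n \<times> 't)^'n" where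
  "Lcat B \<rho> z = (\<chi> i p. Ltil B \<rho> z (snd p) $ i $ fst p)"

definition csize :: "('n \<Rightarrow> 'k) \<Rightarrow> 'k \<Rightarrow> nat" where
  "csize z k = card {i. z i = k}"

definition Qmat :: "('t \<Rightarrow> real^'k^'k) \<Rightarrow> ('n::finite \<Rightarrow> 'k) \<Rightarrow> 't \<Rightarrow> real^'k^'k" where
  "Qmat B z t = (\<chi> k l. (real (csize z k) / real CARD('n)) * (real (csize z l) / real CARD('n)) * B t $ k $ l)"

definition DQ :: "('t \<Rightarrow> real^'k^'k) \<Rightarrow> ('n::finite \<Rightarrow> 'k) \<Rightarrow> 't \<Rightarrow> real^'k^'k" where
  "DQ B z t = diag_mat (\<chi> k. \<Sum>l\<in>UNIV. Qmat B z t $ k $ l)"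

definition Mtil :: "('t \<Rightarrow> real^'k^'k) \<Rightarrow> ('n::finite \<Rightarrow> 'k) \<Rightarrow> 't \<Rightarrow> real^'k^'k" where
  "Mtil B z t =
     mat 1 - diag_mat (\<chi> k. 1 / sqrt (DQ B z t $ k $ k)) ** Qmat B z t
               ** diag_mat (\<chi> k. 1 / sqrt (DQ B z t $ k $ k))"

definition Mcat :: "('t::finite \<Rightarrow> real^'k^'k) \<Rightarrow> ('n::finite \<Rightarrow> 'k) \<Rightarrow> real^('k \<times> 't)^'k" where
  "Mcat B z = (\<chi> k p. Mtil B z (snd p) $ k $ fst p)"

definition Phi :: "('n \<Rightarrow> 'k) \<Rightarrow> real^'k^'n" where
  "Phi z = (\<chi> i k. if z i = k then 1 else 0)"

definition Ninvsqrt :: "('n \<Rightarrow> 'k) \<Rightarrow> real^'k^'k" where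
  "Ninvsqrt z = diag_mat (\<chi> k. 1 / sqrt (real (csize z k)))"

definition Sspace :: "('n \<Rightarrow> 'k::finite) \<Rightarrow> (real^'n) set" where
  "Sspace z = span (columns (Phi z))"

definition Sperp :: "('n \<Rightarrow> 'k) \<Rightarrow> (real^'n) set" where
  "Sperp z = {x. \<forall>k. (\<Sum>i\<in>{i. z i = k}. x $ i) = 0}"

definition left_singular_vector :: "real^'c^'r \<Rightarrow> real \<Rightarrow> real^'r \<Rightarrow> bool" where
  "left_singular_vector A \<sigma> x \<longleftrightarrow> \<sigma> \<ge> 0 \<and> norm x = 1 \<and>
     (\<exists>v. norm v = 1 \<and> A *v v = \<sigma> *\<^sub>R x \<and> transpose A *v x = \<sigma> *\<^sub>R v)"

definition orthonormal_on :: "'i set \<Rightarrow> ('i \<Rightarrow> real^'m) \<Rightarrow> bool" where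
  "orthonormal_on I u \<longleftrightarrow> (\<forall>i\<in>I. \<forall>j\<in>I. u i \<bullet> u j = (if i = j then 1 else 0))"

end

theory Submission
  imports Defs
begin

lemma diag_left: "(diag_mat a ** X) $ i $ j = a $ i * X $ i $ j"
  by (simp add: diag_mat_def matrix_matrix_mult_def if_distrib[of "\<lambda>x. x * _"] cong: if_cong)

lemma diag_right: "(X ** diag_mat b) $ i $ j = X $ i $ j * b $ j"
  by (simp add: diag_mat_def matrix_matrix_mult_def if_distrib cong: if_cong)

lemma sum_group_z:
  fixes z :: "'n::finite \<Rightarrow> 'k::finite"
  shows "(\<Sum>j\<in>UNIV. f (z j)) = (\<Sum>l\<in>UNIV. real (csize z l) * (f l :: real))"
proof -
  have "(\<Sum>j\<in>UNIV. f (z j)) = (\<Sum>j\<in>UNIV. \<Sum>l\<in>UNIV. if z j = l then f l else 0)"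
    by simp
  also have "\<dots> = (\<Sum>l\<in>UNIV. \<Sum>j\<in>UNIV. if z j = l then f l else 0)"
    by (rule sum.swap)
  also have "\<dots> = (\<Sum>l\<in>UNIV. real (csize z l) * f l)"
    by (simp add: sum.If_cases csize_def Collect_conv_if)
  finally show ?thesis .
qed

lemma G_entry: "(Phi z ** Ninvsqrt z) $ i $ k = (if z i = k then 1 / sqrt (real (csize z k)) else 0)"
  unfolding Ninvsqrt_def by (simp add: diag_right Phi_def)

lemma GtG:
  fixes z :: "'n::finite \<Rightarrow> 'k::finite"
  assumes sizes: "\<And>k. 0 < csize z k"
  shows "transpose (Phi z ** Ninvsqrt z) ** (Phi z ** Ninvsqrt z) = mat 1"
proof -
  have "(\<Sum>i\<in>UNIV. (if z i = k then 1 / sqrt (real (csize z k)) else 0) * (if z i = l then 1 / sqrt (real (csize z l)) else 0))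
       = (if k = l then 1 else 0)" for k l
  proof -
    have "(\<Sum>i\<in>UNIV. (if z i = k then 1 / sqrt (real (csize z k)) else 0) * (if z i = l then 1 / sqrt (real (csize z l)) else 0))
       = (\<Sum>i\<in>UNIV. if z i = k then (if k = l then 1 / real (csize z k) else 0) else 0)"
      by (rule sum.cong) (auto simp: real_sqrt_mult[symmetric])
    also have "\<dots> = (if k = l then 1 else 0)"
      using sizes[of k] by (auto simp add: sum.If_cases csize_def Collect_conv_if)
    finally show ?thesis .
  qed
  moreover have "(transpose G ** G) $ k $ l = (\<Sum>i\<in>UNIV. G $ i $ k * G $ i $ l)" for G :: "real^'k^'n" and k l
    by (simp add: matrix_matrix_mult_def transpose_def)
  ultimately show ?thesis
    by (simp add: vec_eq_iff G_entry mat_def)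
qed


definition sB :: "('t \<Rightarrow> real^'k^'k) \<Rightarrow> ('n \<Rightarrow> 'k::finite) \<Rightarrow> 't \<Rightarrow> 'k \<Rightarrow> real" where
  "sB B z t k = (\<Sum>l\<in>UNIV. real (csize z l) * B t $ k $ l)"

definition Smat :: "('t \<Rightarrow> real^'k^'k) \<Rightarrow> ('n::finite \<Rightarrow> 'k::finite) \<Rightarrow> 't \<Rightarrow> real^'k^'k" where
  "Smat B z t = diag_mat (\<chi> k. 1 / sqrt (DQ B z t $ k $ k)) ** Qmat B z t
               ** diag_mat (\<chi> k. 1 / sqrt (DQ B z t $ k $ k))"

lemma sB_pos:
  assumes "\<And>t k l. 0 < B t $ k $ l" "\<And>k. 0 < csize z k"
  shows "0 < sB B z t k"
  unfolding sB_def
  by (rule sum_pos) (use assms in auto)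

lemma dtil_eq: "dtil B \<rho> z t $ i = \<rho> * sB B z t (z i)"
  unfolding dtil_def Pmat_def sB_def
  by (simp add: sum_group_z[where f="\<lambda>l. \<rho> * B t $ z i $ l"] sum_distrib_left mult.left_commute)

lemma DQ_eq:
  fixes z :: "'n::finite \<Rightarrow> 'k::finite"
  shows "DQ B z t $ k $ k = real (csize z k) * sB B z t k / (real CARD('n))^2"
  unfolding DQ_def diag_mat_def Qmat_def sB_def
  by (simp add: sum_distrib_left sum_divide_distrib power2_eq_square field_simps)

lemma S_entry:
  fixes z :: "'n::finite \<Rightarrow> 'k::finite"
  assumes "\<And>t k l. 0 < B t $ k $ l" "\<And>k. 0 < csize z k"
  shows "Smat B z t $ k $ l = sqrt (real (csize z k)) * sqrt (real (csize z l)) * B t $ k $ l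
           / (sqrt (sB B z t k) * sqrt (sB B z t l))"
proof -
  have p1: "0 < sB B z t k" "0 < sB B z t l" using sB_pos[of B z, OF assms(1,2)] by auto
  have p2: "0 < real (csize z k)" "0 < real (csize z l)" using assms by auto
  have n: "0 < real CARD('n)" by simp
  have sq: "sqrt (a * b / c\<^sup>2) = sqrt a * sqrt b / c" if "c > 0" for a b c :: real
    using that by (simp add: real_sqrt_mult real_sqrt_divide)
  have e1: "real (csize z k) = sqrt (real (csize z k)) * sqrt (real (csize z k))"
    by simp
  have e2: "real (csize z l) = sqrt (real (csize z l)) * sqrt (real (csize z l))"
    by simp
  have "Smat B z t $ k $ l = real (csize z k) / real CARD('n) * (real (csize z l) / real CARD('n)) * B t $ k $ l
     / (sqrt (real (csize z k)) * sqrt (sB B z t k) / real CARD('n) * (sqrt (real (csize z l)) * sqrt (sB B z t l) / real CARD('n)))"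
    unfolding Smat_def by (simp add: diag_left diag_right DQ_eq sq Qmat_def)
  also have "\<dots> = sqrt (real (csize z k)) * sqrt (real (csize z l)) * B t $ k $ l
           / (sqrt (sB B z t k) * sqrt (sB B z t l))"
    apply (subst (1 2) e1, subst e2, subst e2)
    using p1 p2 n by (simp add: field_simps)
  finally show ?thesis .
qed

lemma A_entry:
  fixes z :: "'n::finite \<Rightarrow> 'k::finite"
  assumes "\<And>t k l. 0 < B t $ k $ l" "\<And>k. 0 < csize z k" "0 < \<rho>"
  shows "(diag_mat (\<chi> i. 1 / sqrt (dtil B \<rho> z t $ i)) ** Pmat B \<rho> z t
               ** diag_mat (\<chi> i. 1 / sqrt (dtil B \<rho> z t $ i))) $ i $ j
       = B t $ z i $ z j / (sqrt (sB B z t (z i)) * sqrt (sB B z t (z j)))"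
proof -
  have p1: "0 < sB B z t (z i)" "0 < sB B z t (z j)" using sB_pos[of B z, OF assms(1,2)] by auto
  have e: "\<rho> = sqrt \<rho> * sqrt \<rho>" using assms by simp
  show ?thesis
    apply (simp add: diag_left diag_right dtil_eq Pmat_def real_sqrt_mult)
    apply (subst (1) e)
    using p1 assms(3) by (simp add: field_simps)
qed

lemma GXGt:
  fixes z :: "'n::finite \<Rightarrow> 'k::finite"
  shows "((Phi z ** Ninvsqrt z) ** X ** transpose (Phi z ** Ninvsqrt z)) $ i $ j
     = X $ z i $ z j / (sqrt (real (csize z (z i))) * sqrt (real (csize z (z j))))"
proof -
  have "(G ** X ** transpose G) $ i $ j = (\<Sum>l\<in>UNIV. (\<Sum>k\<in>UNIV. G $ i $ k * X $ k $ l) * G $ j $ l)"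
    for G :: "real^'k^'n"
    by (simp add: matrix_matrix_mult_def transpose_def)
  then show ?thesis
    by (simp add: G_entry if_distrib[of "\<lambda>x. x * _"] if_distrib[of "\<lambda>x. _ * x"] cong: if_cong)
qed


lemma mv_sum: "(A::real^'m^'n) *v (\<Sum>t\<in>I. f t) = (\<Sum>t\<in>I. A *v f t)"
  by (rule linear_sum[OF matrix_vector_mul_linear, unfolded o_def])

lemma sum_prod_UNIV: "(\<Sum>p\<in>(UNIV :: ('a::finite \<times> 'b::finite) set). g p) = (\<Sum>t\<in>UNIV. \<Sum>m\<in>UNIV. g (m, t))"
  by (subst sum.swap) (simp add: sum.cartesian_product UNIV_Times_UNIV[symmetric] del: UNIV_Times_UNIV)

definition catm :: "('t::finite \<Rightarrow> real^'a^'b) \<Rightarrow> real^('a \<times> 't)^'b" where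
  "catm F = (\<chi> i p. F (snd p) $ i $ fst p)"

lemma Lcat_catm: "Lcat B \<rho> z = catm (Ltil B \<rho> z)"
  by (simp add: Lcat_def catm_def)

lemma Mcat_catm: "Mcat B z = catm (Mtil B z)"
  by (simp add: Mcat_def catm_def)

lemma cat_mv: "catm F *v v = (\<Sum>t\<in>UNIV. F t *v (\<chi> m. v $ (m, t)))"
  by (simp add: vec_eq_iff catm_def matrix_vector_mult_def sum_prod_UNIV sum_component)

lemma cat_tmv:
  assumes "\<And>t. transpose (F t) = F t"
  shows "transpose (catm F) *v x = (\<chi> p. (F (snd p) *v x) $ fst p)"
proof -
  have "(transpose (catm F) *v x) $ p = (transpose (F (snd p)) *v x) $ fst p" for p
    by (simp only: matrix_vector_mult_def transpose_def catm_def vec_lambda_beta)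
  then show ?thesis using assms by (simp add: vec_eq_iff del: transpose_matrix_vector)
qed

lemma inner_mv: "(A *v a) \<bullet> c = a \<bullet> (transpose A *v (c::real^'n))"
  by (metis dot_lmul_matrix vector_transpose_matrix)

lemma inner_prod_split: "(a::real^('m::finite \<times> 't::finite)) \<bullet> b = (\<Sum>t\<in>UNIV. (\<chi> m. a $ (m, t)) \<bullet> (\<chi> m. b $ (m, t)))"
  by (simp add: inner_vec_def sum_prod_UNIV)

lemma left_sv_from_eig:
  fixes M :: "real^'c^'r"
  assumes "(M ** transpose M) *v w = c *\<^sub>R w" "0 < c" "norm w = 1"
  shows "left_singular_vector M (sqrt c) w"
proof -
  define v where "v = (1 / sqrt c) *\<^sub>R (transpose M *v w)"
  have ww: "w \<bullet> w = 1" using assms(3) norm_eq_1 by blast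
  have "(transpose M *v w) \<bullet> (transpose M *v w) = w \<bullet> (M *v (transpose M *v w))"
    by (subst inner_mv) simp
  also have "\<dots> = c" using assms(1) ww by (simp add: matrix_vector_mul_assoc del: transpose_matrix_vector)
  finally have tt: "(transpose M *v w) \<bullet> (transpose M *v w) = c" .
  have "v \<bullet> v = 1" unfolding v_def using tt assms(2) by simp
  then have nv: "norm v = 1" using norm_eq_1 by blast
  have "M *v v = sqrt c *\<^sub>R w"
    unfolding v_def using assms(1,2)
    by (simp add: matrix_vector_mult_scaleR matrix_vector_mul_assoc real_div_sqrt del: transpose_matrix_vector)
  moreover have "transpose M *v w = sqrt c *\<^sub>R v"
    unfolding v_def using assms(2) by (simp del: transpose_matrix_vector)
  ultimately show ?thesis unfolding left_singular_vector_def using nv assms by auto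
qed


lemma Ltil_eq:
  fixes z :: "'n::finite \<Rightarrow> 'k::finite"
  assumes "\<And>t k l. 0 < B t $ k $ l" "\<And>k. 0 < csize z k" "0 < \<rho>"
  shows "Ltil B \<rho> z t = mat 1 - (Phi z ** Ninvsqrt z) ** Smat B z t ** transpose (Phi z ** Ninvsqrt z)"
proof -
  have "(diag_mat (\<chi> i. 1 / sqrt (dtil B \<rho> z t $ i)) ** Pmat B \<rho> z t
               ** diag_mat (\<chi> i. 1 / sqrt (dtil B \<rho> z t $ i))) $ i $ j
       = ((Phi z ** Ninvsqrt z) ** Smat B z t ** transpose (Phi z ** Ninvsqrt z)) $ i $ j" for i j
  proof -
    have p: "0 < real (csize z (z i))" "0 < real (csize z (z j))" using assms(2) by auto
    show ?thesis
      unfolding A_entry[OF assms] GXGt S_entry[OF assms(1,2)]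
      using p by (simp add: field_simps)
  qed
  then show ?thesis unfolding Ltil_def by (simp add: vec_eq_iff)
qed

lemma Mtil_eq: "Mtil B z t = mat 1 - Smat B z t"
  by (simp add: Mtil_def Smat_def)

lemma Smat_sym:
  fixes z :: "'n::finite \<Rightarrow> 'k::finite"
  assumes "\<And>t k l. 0 < B t $ k $ l" "\<And>k. 0 < csize z k" "\<And>t. transpose (B t) = B t"
  shows "transpose (Smat B z t) = Smat B z t"
proof -
  have b: "B t $ l $ k = B t $ k $ l" for k l
    using arg_cong[where f="\<lambda>M. M $ k $ l", OF assms(3)[of t]] by (simp add: transpose_def)
  show ?thesis
    by (simp add: vec_eq_iff transpose_def S_entry[OF assms(1,2)] b mult_ac)
qed

lemma Mtil_sym:
  fixes z :: "'n::finite \<Rightarrow> 'k::finite"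
  assumes "\<And>t k l. 0 < B t $ k $ l" "\<And>k. 0 < csize z k" "\<And>t. transpose (B t) = B t"
  shows "transpose (Mtil B z t) = Mtil B z t"
proof -
  have "(Smat B z t) $ j $ i = Smat B z t $ i $ j" for i j
    using arg_cong[where f="\<lambda>M. M $ i $ j", OF Smat_sym[OF assms, where t=t]] by (simp add: transpose_def)
  then show ?thesis unfolding Mtil_eq by (simp add: vec_eq_iff transpose_def mat_def)
qed

lemma Ltil_sym:
  fixes z :: "'n::finite \<Rightarrow> 'k::finite"
  assumes "\<And>t k l. 0 < B t $ k $ l" "\<And>k. 0 < csize z k" "0 < \<rho>" "\<And>t. transpose (B t) = B t"
  shows "transpose (Ltil B \<rho> z t) = Ltil B \<rho> z t"
proof -
  have "(Smat B z t) $ j $ i = Smat B z t $ i $ j" for i j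
    using arg_cong[where f="\<lambda>M. M $ i $ j", OF Smat_sym[OF assms(1,2,4), where t=t]] by (simp add: transpose_def)
  note S = this
  have h: "Ltil B \<rho> z t $ i $ j = (if i = j then 1 else 0) - Smat B z t $ z i $ z j
     / (sqrt (real (csize z (z i))) * sqrt (real (csize z (z j))))" for i j
    unfolding Ltil_eq[OF assms(1-3)] by (simp add: GXGt mat_def)
  have "Ltil B \<rho> z t $ j $ i = Ltil B \<rho> z t $ i $ j" for i j
    unfolding h S[of "z i" "z j"] by (simp add: mult.commute eq_commute)
  then show ?thesis by (simp add: vec_eq_iff transpose_def)
qed

lemma mat1_minus_mv: "(mat 1 - X) *v v = v - X *v (v::real^'n)"
  by (simp add: matrix_vector_mult_diff_rdistrib)

lemma LGv:
  fixes z :: "'n::finite \<Rightarrow> 'k::finite"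
  assumes "\<And>t k l. 0 < B t $ k $ l" "\<And>k. 0 < csize z k" "0 < \<rho>"
  shows "Ltil B \<rho> z t *v ((Phi z ** Ninvsqrt z) *v y) = (Phi z ** Ninvsqrt z) *v (Mtil B z t *v y)"
proof -
  define G where "G = Phi z ** Ninvsqrt z"
  have GG: "transpose G ** G = mat 1" unfolding G_def using GtG assms(2) by blast
  have "Ltil B \<rho> z t *v (G *v y) = G *v y - G *v (Smat B z t *v (transpose G *v (G *v y)))"
    unfolding Ltil_eq[OF assms] G_def[symmetric] mat1_minus_mv
    by (simp only: matrix_vector_mul_assoc matrix_mul_assoc)
  also have "transpose G *v (G *v y) = y"
    by (simp only: matrix_vector_mul_assoc GG matrix_vector_mul_lid)
  finally show ?thesis unfolding G_def[symmetric] Mtil_eq mat1_minus_mv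
    by (simp add: matrix_vector_mult_diff_distrib)
qed

lemma Sperp_Gt:
  fixes z :: "'n::finite \<Rightarrow> 'k::finite"
  assumes "x \<in> Sperp z"
  shows "transpose (Phi z ** Ninvsqrt z) *v x = 0"
proof -
  have "(transpose G *v x) $ k = (\<Sum>i\<in>UNIV. G $ i $ k * x $ i)" for G :: "real^'k^'n" and k
    by (simp only: matrix_vector_mult_def transpose_def vec_lambda_beta)
  moreover have "(\<Sum>i\<in>UNIV. (if z i = k then 1 / sqrt (real (csize z k)) else 0) * x $ i) = 0" for k
  proof -
    have "(\<Sum>i\<in>UNIV. (if z i = k then 1 / sqrt (real (csize z k)) else 0) * x $ i)
        = 1 / sqrt (real (csize z k)) * (\<Sum>i\<in>{i. z i = k}. x $ i)"
      by (simp add: sum_distrib_left sum.inter_filter[symmetric] if_distrib[of "\<lambda>a. a * _"] cong: if_cong)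
    then show ?thesis using assms unfolding Sperp_def by simp
  qed
  ultimately show ?thesis by (simp add: vec_eq_iff G_entry del: transpose_matrix_vector)
qed

lemma Ltil_Sperp:
  fixes z :: "'n::finite \<Rightarrow> 'k::finite"
  assumes "\<And>t k l. 0 < B t $ k $ l" "\<And>k. 0 < csize z k" "0 < \<rho>" "x \<in> Sperp z"
  shows "Ltil B \<rho> z t *v x = x"
  unfolding Ltil_eq[OF assms(1-3)] mat1_minus_mv
  by (simp only: matrix_vector_mul_assoc[symmetric] Sperp_Gt[OF assms(4)]) simp


lemma col_inner:
  fixes z :: "'n::finite \<Rightarrow> 'k::finite"
  shows "column k (Phi z) \<bullet> y = (\<Sum>i\<in>{i. z i = k}. y $ i)"
  by (simp add: column_def Phi_def inner_vec_def sum.inter_filter[symmetric] if_distrib[of "\<lambda>a. a * _"] cong: if_cong)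

lemma Sperp_orth:
  fixes z :: "'n::finite \<Rightarrow> 'k::finite"
  shows "Sperp z = {y. \<forall>x\<in>Sspace z. orthogonal x y}"
proof (intro set_eqI iffI)
  fix y assume y: "y \<in> Sperp z"
  have "orthogonal x y" if "x \<in> Sspace z" for x
  proof -
    have "orthogonal y x"
      using that unfolding Sspace_def
    proof (rule orthogonal_to_span)
      fix c assume "c \<in> columns (Phi z)"
      then obtain k where "c = column k (Phi z)" by (auto simp: columns_def)
      then show "orthogonal y c" using y
        by (simp add: orthogonal_def inner_commute[of y] col_inner Sperp_def)
    qed
    then show ?thesis by (simp add: orthogonal_commute)
  qed
  then show "y \<in> {y. \<forall>x\<in>Sspace z. orthogonal x y}" by blast
next
  fix y assume "y \<in> {y. \<forall>x\<in>Sspace z. orthogonal x y}"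
  then have "orthogonal (column k (Phi z)) y" for k
    unfolding Sspace_def by (auto intro: span_base simp: columns_def)
  then show "y \<in> Sperp z" by (simp add: Sperp_def orthogonal_def col_inner)
qed

lemma dim_Sspace:
  fixes z :: "'n::finite \<Rightarrow> 'k::finite"
  assumes "\<And>k. 0 < csize z k"
  shows "dim (Sspace z) = CARD('k)"
proof -
  have ne: "\<exists>i. z i = k" for k using assms[of k] unfolding csize_def
    by (auto simp: card_gt_0_iff)
  have colv: "column k (Phi z) $ i = (if z i = k then 1 else 0)" for k i
    by (simp add: column_def Phi_def)
  have inj: "inj (\<lambda>k. column k (Phi z))"
  proof
    fix k l assume e: "column k (Phi z) = column l (Phi z)"
    obtain i where "z i = k" using ne by blast
    then show "k = l" using e colv by (metis vec_eq_iff zero_neq_one)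
  qed
  have cols: "columns (Phi z) = range (\<lambda>k. column k (Phi z))"
    by (auto simp: columns_def)
  have orth: "pairwise orthogonal (columns (Phi z))"
    unfolding pairwise_def cols
  proof clarsimp
    fix k l assume "column k (Phi z) \<noteq> column l (Phi z)"
    then have "k \<noteq> l" by blast
    then show "orthogonal (column k (Phi z)) (column l (Phi z))"
      by (simp add: orthogonal_def col_inner colv)
  qed
  have nz: "0 \<notin> columns (Phi z)"
  proof
    assume "0 \<in> columns (Phi z)"
    then obtain k where "column k (Phi z) = 0" by (auto simp: cols)
    moreover obtain i where "z i = k" using ne by blast
    ultimately show False using colv[of k i] by simp
  qed
  have ind: "independent (columns (Phi z))"
    by (rule pairwise_orthogonal_independent[OF orth nz])
  have "dim (Sspace z) = card (columns (Phi z))"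
    unfolding Sspace_def dim_span by (rule dim_eq_card_independent[OF ind])
  also have "\<dots> = CARD('k)" unfolding cols using inj by (simp add: card_image)
  finally show ?thesis .
qed

lemma dim_Sperp:
  fixes z :: "'n::finite \<Rightarrow> 'k::finite"
  assumes "\<And>k. 0 < csize z k"
  shows "dim (Sperp z) = CARD('n) - CARD('k)" "subspace (Sperp z)"
proof -
  have "dim {y \<in> UNIV. \<forall>x\<in>Sspace z. orthogonal x y} + dim (Sspace z) = dim (UNIV :: (real^'n) set)"
    by (rule dim_subspace_orthogonal_to_vectors) (auto simp: Sspace_def)
  then show "dim (Sperp z) = CARD('n) - CARD('k)"
    unfolding Sperp_orth dim_Sspace[OF assms] by simp
  show "subspace (Sperp z)" unfolding Sperp_orth
    by (simp add: subspace_def orthogonal_clauses)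
qed


theorem lemma3:
  fixes B :: "'t::finite \<Rightarrow> real^'k::finite^'k"
    and \<rho> :: real
    and z :: "'n::finite \<Rightarrow> 'k"
    and lam :: "nat \<Rightarrow> real"
    and xt :: "nat \<Rightarrow> real^'k"
  assumes B_sym: "\<And>t. transpose (B t) = B t"
    and B_pos: "\<And>t k l. 0 < B t $ k $ l"
    and B_le1: "\<And>t k l. B t $ k $ l \<le> 1"
    and rho: "0 < \<rho>" "\<rho> \<le> 1"
    and sizes: "\<And>k. 0 < csize z k"
    and lam_sorted: "\<And>i j. i \<le> j \<Longrightarrow> j < CARD('k) \<Longrightarrow> lam i \<le> lam j"
    and xt_sv: "\<And>i. i < CARD('k) \<Longrightarrow> left_singular_vector (Mcat B z) (lam i) (xt i)"
    and xt_on: "orthonormal_on {..<CARD('k)} xt"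
  shows "(\<forall>x\<in>Sperp z. (Lcat B \<rho> z ** transpose (Lcat B \<rho> z)) *v x = real CARD('t) *\<^sub>R x)
       \<and> orthonormal_on {..<CARD('k)} (\<lambda>i. Phi z ** Ninvsqrt z *v xt i)
       \<and> (\<forall>i<CARD('k). Phi z ** Ninvsqrt z *v xt i \<in> Sspace z
            \<and> (Lcat B \<rho> z ** transpose (Lcat B \<rho> z)) *v (Phi z ** Ninvsqrt z *v xt i)
                = (lam i)\<^sup>2 *\<^sub>R (Phi z ** Ninvsqrt z *v xt i))
       \<and> (\<exists>w :: nat \<Rightarrow> real^'n.
            orthonormal_on {..<CARD('n) - CARD('k)} w
          \<and> w ` {..<CARD('n) - CARD('k)} \<subseteq> Sperp z
          \<and> span (w ` {..<CARD('n) - CARD('k)}) = Sperp z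
          \<and> (\<forall>j<CARD('n) - CARD('k). left_singular_vector (Lcat B \<rho> z) (sqrt (real CARD('t))) (w j)))
       \<and> (\<forall>i<CARD('k). left_singular_vector (Lcat B \<rho> z) (lam i) (Phi z ** Ninvsqrt z *v xt i))"
proof -
  define G where "G = Phi z ** Ninvsqrt z"
  define L where "L = Lcat B \<rho> z"
  have GG: "transpose G ** G = mat 1" unfolding G_def using GtG sizes by blast
  have Giso: "(G *v a) \<bullet> (G *v b) = a \<bullet> b" for a b
    by (simp only: inner_mv matrix_vector_mul_assoc GG matrix_vector_mul_lid)
  have Lsym: "\<And>t. transpose (Ltil B \<rho> z t) = Ltil B \<rho> z t"
    using Ltil_sym[where B=B and z=z and \<rho>=\<rho>, OF B_pos sizes rho(1) B_sym] by blast
  have Msym: "\<And>t. transpose (Mtil B z t) = Mtil B z t"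
    using Mtil_sym[where B=B and z=z, OF B_pos sizes B_sym] by blast
  have LtL: "transpose L *v x = (\<chi> p. (Ltil B \<rho> z (snd p) *v x) $ fst p)" for x
    unfolding L_def Lcat_catm by (rule cat_tmv[OF Lsym])
  have Lv: "L *v v = (\<Sum>t\<in>UNIV. Ltil B \<rho> z t *v (\<chi> m. v $ (m, t)))" for v
    unfolding L_def Lcat_catm by (rule cat_mv)
  have LG: "Ltil B \<rho> z t *v (G *v y) = G *v (Mtil B z t *v y)" for t y
    unfolding G_def by (rule LGv[where B=B and z=z and \<rho>=\<rho>, OF B_pos sizes rho(1)])
  have LLt: "(L ** transpose L) *v x = L *v (transpose L *v x)" for x
    by (simp only: matrix_vector_mul_assoc)
  have P1: "(L ** transpose L) *v x = real CARD('t) *\<^sub>R x" if "x \<in> Sperp z" for x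
  proof -
    have "transpose L *v x = (\<chi> p. x $ fst p)"
      unfolding LtL Ltil_Sperp[where B=B and z=z and \<rho>=\<rho>, OF B_pos sizes rho(1) that] ..
    then have "(L ** transpose L) *v x = (\<Sum>t\<in>(UNIV::'t set). x)"
      unfolding LLt Lv by (simp add: Ltil_Sperp[where B=B and z=z and \<rho>=\<rho>, OF B_pos sizes rho(1) that] del: transpose_matrix_vector)
    then show ?thesis by (simp add: scaleR_conv_of_real)
  qed
  have P5: "left_singular_vector L (lam i) (G *v xt i) \<and>
        (L ** transpose L) *v (G *v xt i) = (lam i)\<^sup>2 *\<^sub>R (G *v xt i)" if i: "i < CARD('k)" for i
  proof -
    obtain v where lam0: "lam i \<ge> 0" and nx: "norm (xt i) = 1" and nv: "norm v = 1"
      and Mv: "Mcat B z *v v = lam i *\<^sub>R xt i" and Mtx: "transpose (Mcat B z) *v xt i = lam i *\<^sub>R v"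
      using xt_sv[OF i] unfolding left_singular_vector_def by blast
    define vt where "vt t = (\<chi> k. v $ (k, t))" for t
    define v' where "v' = (\<chi> p. (G *v vt (snd p)) $ fst p)"
    have Mt: "Mtil B z t *v xt i = lam i *\<^sub>R vt t" for t
    proof -
      have "transpose (Mcat B z) *v xt i = (\<chi> p. (Mtil B z (snd p) *v xt i) $ fst p)"
        unfolding Mcat_catm by (rule cat_tmv[OF Msym])
      then have e: "lam i *\<^sub>R v = (\<chi> p. (Mtil B z (snd p) *v xt i) $ fst p)"
        by (rule trans[OF Mtx[symmetric]])
      have "(Mtil B z t *v xt i) $ k = lam i * v $ (k, t)" for k
        using arg_cong[where f="\<lambda>x. x $ (k, t)", OF e] by simp
      then show ?thesis by (simp add: vec_eq_iff vt_def)
    qed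
    have v'c: "(\<chi> m. v' $ (m, t)) = G *v vt t" for t
      by (simp add: v'_def vec_eq_iff)
    have "v' \<bullet> v' = v \<bullet> v"
      unfolding inner_prod_split[of v'] inner_prod_split[of v] v'c Giso vt_def ..
    then have nv': "norm v' = 1" using nv norm_eq_1 by metis
    have "L *v v' = G *v (\<Sum>t\<in>UNIV. Mtil B z t *v vt t)"
      unfolding Lv v'c LG mv_sum ..
    also have "(\<Sum>t\<in>UNIV. Mtil B z t *v vt t) = Mcat B z *v v"
      unfolding Mcat_catm cat_mv vt_def ..
    finally have Lv': "L *v v' = lam i *\<^sub>R (G *v xt i)"
      by (simp add: Mv matrix_vector_mult_scaleR)
    have LtG: "transpose L *v (G *v xt i) = lam i *\<^sub>R v'"
      unfolding LtL LG Mt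
      by (simp add: vec_eq_iff v'_def matrix_vector_mult_scaleR del: transpose_matrix_vector)
    have nu: "norm (G *v xt i) = 1"
      using nx Giso norm_eq_1 by metis
    have "left_singular_vector L (lam i) (G *v xt i)"
      unfolding left_singular_vector_def using lam0 nu nv' Lv' LtG by blast
    moreover have "(L ** transpose L) *v (G *v xt i) = (lam i)\<^sup>2 *\<^sub>R (G *v xt i)"
      unfolding LLt LtG by (simp add: matrix_vector_mult_scaleR Lv' power2_eq_square del: transpose_matrix_vector)
    ultimately show ?thesis ..
  qed
  have P2: "orthonormal_on {..<CARD('k)} (\<lambda>i. G *v xt i)"
    using xt_on unfolding orthonormal_on_def Giso .
  have P3: "G *v y \<in> Sspace z" for y
    unfolding G_def Sspace_def matrix_vector_mul_assoc[symmetric]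
    by (rule matrix_vector_mult_in_columnspace)
  have P4: "\<exists>w :: nat \<Rightarrow> real^'n.
            orthonormal_on {..<CARD('n) - CARD('k)} w
          \<and> w ` {..<CARD('n) - CARD('k)} \<subseteq> Sperp z
          \<and> span (w ` {..<CARD('n) - CARD('k)}) = Sperp z
          \<and> (\<forall>j<CARD('n) - CARD('k). left_singular_vector L (sqrt (real CARD('t))) (w j))"
  proof -
    obtain Bs where Bs: "Bs \<subseteq> Sperp z" "pairwise orthogonal Bs" "\<And>x. x \<in> Bs \<Longrightarrow> norm x = 1"
      "independent Bs" "card Bs = dim (Sperp z)" "span Bs = Sperp z"
      using orthonormal_basis_subspace[OF dim_Sperp(2)[OF sizes]] by blast
    have fin: "finite Bs" using Bs(4) independent_imp_finite by blast
    obtain h where h: "bij_betw h {0..<card Bs} Bs" using ex_bij_betw_nat_finite[OF fin] by blast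
    have cB: "card Bs = CARD('n) - CARD('k)" using Bs(5) dim_Sperp(1)[OF sizes] by simp
    have img: "h ` {..<CARD('n) - CARD('k)} = Bs"
      using h cB by (simp add: bij_betw_def atLeast0LessThan)
    have injh: "inj_on h {..<CARD('n) - CARD('k)}"
      using h cB by (simp add: bij_betw_def atLeast0LessThan)
    have "orthonormal_on {..<CARD('n) - CARD('k)} h"
      unfolding orthonormal_on_def
    proof (intro ballI)
      fix i j assume ij: "i \<in> {..<CARD('n) - CARD('k)}" "j \<in> {..<CARD('n) - CARD('k)}"
      have hi: "h i \<in> Bs" "h j \<in> Bs" using ij img by auto
      show "h i \<bullet> h j = (if i = j then 1 else 0)"
      proof (cases "i = j")
        case True then show ?thesis using Bs(3)[OF hi(1)] by (simp add: norm_eq_1)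
      next
        case False
        then have "h i \<noteq> h j" using injh ij by (meson inj_on_eq_iff)
        then show ?thesis using Bs(2) hi False by (simp add: pairwise_def orthogonal_def)
      qed
    qed
    moreover have "\<forall>j<CARD('n) - CARD('k). left_singular_vector L (sqrt (real CARD('t))) (h j)"
    proof (intro allI impI)
      fix j assume "j < CARD('n) - CARD('k)"
      then have hj: "h j \<in> Bs" using img by auto
      show "left_singular_vector L (sqrt (real CARD('t))) (h j)"
        by (rule left_sv_from_eig[OF P1]) (use hj Bs(1,3) in auto)
    qed
    ultimately show ?thesis using img Bs(1,6) by blast
  qed
  show ?thesis
    using P1 P2 P3 P4 P5 unfolding G_def L_def by blast
qed

end
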